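(* If $w\in\mathbb{R}^n$, $w\ge0$, is strongly bilevel feasible, then there exists an extreme point $x$ of $\mathcal{X}$ such that $x$ is bilevel feasible and $x_{\mathcal{A}_1}=w$.
   Context: Single-commodity network pricing setting: $G=(\mathcal{V},\mathcal{A})$ directed graph, arc costs $c\ge0$, nonempty tolled arc set $\mathcal{A}_1\subsetneq\mathcal{A}$, $n=|\mathcal{A}_1|$, $N$ node–arc incidence matrix, single origin $o$ and destination $d$ connected by a toll-free path, $b_o=1$, $b_d=-1$, $b_i=0$ otherwise, $\mathcal{X}=\{x\in\mathbb{R}^{\mathcal{A}}: Nx=b,\ x\ge0\}$, $x_{\mathcal{A}_1}$ the restriction of $x$ to $\mathcal{A}_1$. Let $f(t)=\min\{c^\top x+t^\top x_{\mathcal{A}_1}: x\in\mathcal{X}\}$ for $t\in\mathbb{R}^n$, $t\ge0$, $f(t)=-\infty$ otherwise, and $g(w)=\sup_{t\in\mathbb{R}^n}\{f(t)-t^\top w\}$. A vector $w\ge0$ is strongly bilevel feasible when $\{w\}$ is a reaction set, i.e. $\{w\}=\{w':(w',z)\in F\text{ for some }z\}$ for a face $F$ of $\operatorname{epi}(g)$ whose affine hull's direction space does not contain $(0,1)$. A point $x\in\mathcal{X}$ is bilevel feasible if the hyperplane $\{(t,z): z=-c^\top x-t^\top x_{\mathcal{A}_1}\}$ supports $\operatorname{epi}(-f)$ (i.e. $\operatorname{epi}(-f)$ lies in $\{z\ge -c^\top x-t^\top x_{\mathcal{A}_1}\}$ and meets the hyperplane). *)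

theory Defs
  imports "HOL-Analysis.Analysis" "HOL-Library.Extended_Real"
begin

text \<open>Tolled arcs A1 = range sigma, enumerated injectively by the finite type 'k,
  so that n = CARD('k) and R^n = real^'k.\<close>

definition flows :: "('a::finite \<Rightarrow> 'v) \<Rightarrow> ('a \<Rightarrow> 'v) \<Rightarrow> 'v \<Rightarrow> 'v \<Rightarrow> (real^'a) set" where
  "flows src tgt orig dest =
     {x. (\<forall>i. (\<Sum>a\<in>{a. src a = i}. x $ a) - (\<Sum>a\<in>{a. tgt a = i}. x $ a)
             = (if i = orig then 1 else if i = dest then -1 else 0))
         \<and> (\<forall>a. 0 \<le> x $ a)}"

definition restr :: "('k::finite \<Rightarrow> 'a::finite) \<Rightarrow> real^'a \<Rightarrow> real^'k" where
  "restr \<sigma> x = (\<chi> k. x $ \<sigma> k)"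

definition fval :: "('a::finite \<Rightarrow> 'v) \<Rightarrow> ('a \<Rightarrow> 'v) \<Rightarrow> 'v \<Rightarrow> 'v \<Rightarrow> ('k::finite \<Rightarrow> 'a)
                    \<Rightarrow> real^'a \<Rightarrow> real^'k \<Rightarrow> ereal" where
  "fval src tgt orig dest \<sigma> c t =
     (if (\<forall>k. 0 \<le> t $ k)
      then (INF x\<in>flows src tgt orig dest. ereal (c \<bullet> x + t \<bullet> restr \<sigma> x))
      else -\<infinity>)"

definition gfun :: "('a::finite \<Rightarrow> 'v) \<Rightarrow> ('a \<Rightarrow> 'v) \<Rightarrow> 'v \<Rightarrow> 'v \<Rightarrow> ('k::finite \<Rightarrow> 'a)
                    \<Rightarrow> real^'a \<Rightarrow> real^'k \<Rightarrow> ereal" where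
  "gfun src tgt orig dest \<sigma> c w =
     (SUP t. fval src tgt orig dest \<sigma> c t - ereal (t \<bullet> w))"

definition epi :: "('b \<Rightarrow> ereal) \<Rightarrow> ('b \<times> real) set" where
  "epi h = {(u, z). h u \<le> ereal z}"

definition dirspace :: "('b::real_vector) set \<Rightarrow> 'b set" where
  "dirspace S = {u - v | u v. u \<in> affine hull S \<and> v \<in> affine hull S}"

definition reaction_set :: "(('b::real_vector) \<times> real) set \<Rightarrow> 'b set \<Rightarrow> bool" where
  "reaction_set E R \<longleftrightarrow>
     (\<exists>F. F face_of E \<and> (0, 1) \<notin> dirspace F \<and> R = {w'. \<exists>z. (w', z) \<in> F})"

definition strongly_bilevel_feasible ::
  "('a::finite \<Rightarrow> 'v) \<Rightarrow> ('a \<Rightarrow> 'v) \<Rightarrow> 'v \<Rightarrow> 'v \<Rightarrow> ('k::finite \<Rightarrow> 'a) \<Rightarrow> real^'a \<Rightarrow> real^'k \<Rightarrow> bool" where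
  "strongly_bilevel_feasible src tgt orig dest \<sigma> c w \<longleftrightarrow>
     reaction_set (epi (gfun src tgt orig dest \<sigma> c)) {w}"

definition bilevel_feasible ::
  "('a::finite \<Rightarrow> 'v) \<Rightarrow> ('a \<Rightarrow> 'v) \<Rightarrow> 'v \<Rightarrow> 'v \<Rightarrow> ('k::finite \<Rightarrow> 'a) \<Rightarrow> real^'a \<Rightarrow> real^'a \<Rightarrow> bool" where
  "bilevel_feasible src tgt orig dest \<sigma> c x \<longleftrightarrow>
     x \<in> flows src tgt orig dest \<and>
     epi (\<lambda>t. - fval src tgt orig dest \<sigma> c t) \<subseteq> {(t, z). z \<ge> - (c \<bullet> x) - t \<bullet> restr \<sigma> x} \<and>
     epi (\<lambda>t. - fval src tgt orig dest \<sigma> c t) \<inter> {(t, z). z = - (c \<bullet> x) - t \<bullet> restr \<sigma> x} \<noteq> {}"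

end

theory Submission
  imports Defs
begin


definition netflow :: "('a::finite \<Rightarrow> 'v) \<Rightarrow> ('a \<Rightarrow> 'v) \<Rightarrow> real^'a \<Rightarrow> 'v \<Rightarrow> real" where
  "netflow src tgt x i = (\<Sum>a\<in>UNIV. x $ a * ((if src a = i then 1 else 0) - (if tgt a = i then 1 else 0)))"

lemma netflow_alt:
  "netflow src tgt x i = (\<Sum>a\<in>{a. src a = i}. x $ a) - (\<Sum>a\<in>{a. tgt a = i}. x $ a)"
proof -
  have "(\<Sum>a\<in>{a. src a = i}. x $ a) = (\<Sum>a\<in>UNIV. if src a = i then x $ a else 0)"
    by (simp add: sum.If_cases)
  moreover have "(\<Sum>a\<in>{a. tgt a = i}. x $ a) = (\<Sum>a\<in>UNIV. if tgt a = i then x $ a else 0)"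
    by (simp add: sum.If_cases)
  moreover have "(\<Sum>a\<in>UNIV. x $ a * ((if src a = i then 1 else 0) - (if tgt a = i then 1 else 0)))
     = (\<Sum>a\<in>UNIV. (if src a = i then x $ a else 0) - (if tgt a = i then x $ a else 0))"
    by (rule sum.cong) auto
  ultimately show ?thesis unfolding netflow_def
    by (simp add: sum_subtractf)
qed

lemma netflow_add: "netflow src tgt (x + y) i = netflow src tgt x i + netflow src tgt y i"
  unfolding netflow_def by (simp add: distrib_right sum.distrib)

lemma netflow_diff: "netflow src tgt (x - y) i = netflow src tgt x i - netflow src tgt y i"
  unfolding netflow_def by (simp add: left_diff_distrib sum_subtractf)

lemma netflow_scale: "netflow src tgt (c *\<^sub>R x) i = c * netflow src tgt x i"
  unfolding netflow_def by (simp add: sum_distrib_left mult.assoc)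

lemma netflow_zero: "netflow src tgt 0 i = 0"
  unfolding netflow_def by simp

lemma netflow_axis: "netflow src tgt (axis a 1) i = (if src a = i then 1 else 0) - (if tgt a = i then 1 else 0)"
proof -
  have "netflow src tgt (axis a 1) i = (\<Sum>b\<in>UNIV. if b = a then (if src a = i then 1 else 0) - (if tgt a = i then 1 else 0) else 0)"
    unfolding netflow_def axis_def by (rule sum.cong) auto
  then show ?thesis by simp
qed

lemma walk_vec:
  assumes "(u, v) \<in> {(src a, tgt a) | a. P a} ^^ n"
  shows "\<exists>p::real^'a::finite. (\<forall>i. netflow src tgt p i = (if i = u then 1 else 0) - (if i = v then 1 else 0))
           \<and> (\<forall>a. 0 \<le> p $ a \<and> p $ a \<le> real n \<and> (0 < p $ a \<longrightarrow> P a))"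
  using assms
proof (induction n arbitrary: v)
  case 0
  then show ?case by (intro exI[of _ 0]) (auto simp: netflow_zero)
next
  case (Suc n)
  from Suc.prems obtain m where m1: "(u, m) \<in> {(src a, tgt a) | a. P a} ^^ n"
    and m2: "(m, v) \<in> {(src a, tgt a) | a. P a}" by (rule relpow_Suc_E)
  from m2 obtain a where a: "m = src a" "v = tgt a" "P a" by auto
  from Suc.IH[OF m1] obtain p where p: "\<forall>i. netflow src tgt p i = (if i = u then 1 else 0) - (if i = m then 1 else 0)"
    "\<forall>a. 0 \<le> p $ a \<and> p $ a \<le> real n \<and> (0 < p $ a \<longrightarrow> P a)" by blast
  show ?case
  proof (intro exI[of _ "p + axis a 1"] conjI allI)
    fix i show "netflow src tgt (p + axis a 1) i = (if i = u then 1 else 0) - (if i = v then 1 else 0)"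
      using p(1) a by (simp add: netflow_add netflow_axis)
  next
    fix b show "0 \<le> (p + axis a 1) $ b" "(p + axis a 1) $ b \<le> real (Suc n)"
      "0 < (p + axis a 1) $ b \<longrightarrow> P b"
      using p(2)[rule_format, of b] a by (auto simp: axis_def)
  qed
qed

definition flv :: "('a::finite \<Rightarrow> 'v) \<Rightarrow> ('a \<Rightarrow> 'v) \<Rightarrow> 'v \<Rightarrow> 'v \<Rightarrow> real \<Rightarrow> (real^'a) set" where
  "flv src tgt orig dest v = {x. (\<forall>i. netflow src tgt x i = (if i = orig then v else if i = dest then -v else 0))
      \<and> (\<forall>a. 0 \<le> x $ a)}"

lemma flows_eq: "flows src tgt orig dest = flv src tgt orig dest 1"
  unfolding flows_def flv_def netflow_alt by simp

lemma cut_reach: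
  fixes x :: "real^'a::finite" and src tgt :: "'a \<Rightarrow> 'v::finite"
  assumes nn: "\<forall>a. 0 \<le> x $ a"
    and nf: "\<forall>i. netflow src tgt x i = (if i = orig then v else if i = dest then -v else 0)"
    and v: "v > 0" and od: "orig \<noteq> dest"
  shows "(orig, dest) \<in> {(src a, tgt a) | a. 0 < x $ a}\<^sup>*"
proof (rule ccontr)
  let ?E = "{(src a, tgt a) | a. 0 < x $ a}"
  define R where "R = {i. (orig, i) \<in> ?E\<^sup>*}"
  assume "(orig, dest) \<notin> ?E\<^sup>*"
  then have dR: "dest \<notin> R" by (simp add: R_def)
  have oR: "orig \<in> R" by (simp add: R_def)
  have "(\<Sum>i\<in>R. netflow src tgt x i) = (\<Sum>i\<in>R. if i = orig then v else 0)"
    using dR by (intro sum.cong) (auto simp: nf)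
  also have "\<dots> = v" using oR by simp
  finally have s1: "(\<Sum>i\<in>R. netflow src tgt x i) = v" .
  have "(\<Sum>i\<in>R. netflow src tgt x i) = (\<Sum>a\<in>UNIV. \<Sum>i\<in>R. x $ a * ((if src a = i then 1 else 0) - (if tgt a = i then 1 else 0)))"
    unfolding netflow_def by (rule sum.swap)
  also have "\<dots> = (\<Sum>a\<in>UNIV. x $ a * ((if src a \<in> R then 1 else 0) - (if tgt a \<in> R then 1 else 0)))"
  proof (rule sum.cong)
    fix a
    have "(\<Sum>i\<in>R. x $ a * ((if src a = i then 1 else 0) - (if tgt a = i then 1 else 0)))
       = x $ a * ((\<Sum>i\<in>R. if src a = i then 1 else 0) - (\<Sum>i\<in>R. if tgt a = i then 1 else 0))"
      by (simp add: sum_distrib_left[symmetric] sum_subtractf)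
    also have "\<dots> = x $ a * ((if src a \<in> R then 1 else 0) - (if tgt a \<in> R then 1 else 0))"
      by simp
    finally show "(\<Sum>i\<in>R. x $ a * ((if src a = i then 1 else 0) - (if tgt a = i then 1 else 0)))
       = x $ a * ((if src a \<in> R then 1 else 0) - (if tgt a \<in> R then 1 else 0))" .
  qed simp
  also have "\<dots> \<le> 0"
  proof (rule sum_nonpos)
    fix a
    show "x $ a * ((if src a \<in> R then 1 else 0) - (if tgt a \<in> R then 1 else 0)) \<le> 0"
    proof (cases "0 < x $ a")
      case True
      show ?thesis
      proof (cases "src a \<in> R")
        case True
        then have "tgt a \<in> R" using \<open>0 < x $ a\<close> unfolding R_def
          by (auto intro: rtrancl_into_rtrancl)
        then show ?thesis using True by simp
      next
        case False then show ?thesis using nn[rule_format, of a] by simp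
      qed
    next
      case False then have "x $ a = 0" using nn[rule_format, of a] by simp
      then show ?thesis by simp
    qed
  qed
  finally show False using s1 v by simp
qed

lemma dominate:
  fixes src tgt :: "'a::finite \<Rightarrow> 'v::finite"
  assumes od: "orig \<noteq> dest"
  shows "x \<in> flv src tgt orig dest v \<Longrightarrow> 0 \<le> v \<Longrightarrow>
    \<exists>y \<in> flv src tgt orig dest v. \<forall>a. y $ a \<le> x $ a \<and> y $ a \<le> v * real CARD('v \<times> 'v)"
proof (induction "card {a. 0 < x $ a}" arbitrary: x v rule: less_induct)
  case less
  let ?K = "real CARD('v \<times> 'v)"
  have xnn: "\<forall>a. 0 \<le> x $ a" and xnf: "\<forall>i. netflow src tgt x i = (if i = orig then v else if i = dest then -v else 0)"
    using less.prems(1) by (auto simp: flv_def)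
  show ?case
  proof (cases "v = 0")
    case True
    then show ?thesis using xnn by (intro bexI[of _ 0]) (auto simp: flv_def netflow_zero)
  next
    case False
    then have vpos: "v > 0" using less.prems(2) by simp
    let ?E = "{(src a, tgt a) | a. 0 < x $ a}"
    have reach: "(orig, dest) \<in> ?E\<^sup>*" using cut_reach[OF xnn xnf vpos od] .
    have finE: "finite ?E" by simp
    from reach obtain n where n: "n \<le> card ?E" "(orig, dest) \<in> ?E ^^ n"
      unfolding rtrancl_finite_eq_relpow[OF finE] by blast
    have "card ?E \<le> CARD('v \<times> 'v)" by (rule card_mono) auto
    with n have "n \<le> CARD('v \<times> 'v)" by linarith
    then have nK: "real n \<le> ?K" by (simp only: of_nat_le_iff)
    from walk_vec[OF n(2)] obtain p :: "real^'a" where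
      pnf: "\<forall>i. netflow src tgt p i = (if i = orig then 1 else 0) - (if i = dest then 1 else 0)"
      and pb: "\<forall>a. 0 \<le> p $ a \<and> p $ a \<le> real n \<and> (0 < p $ a \<longrightarrow> 0 < x $ a)" by blast
    define A where "A = {a. 0 < p $ a}"
    have "A \<noteq> {}"
    proof
      assume "A = {}"
      then have "\<forall>i. p $ i = 0" using pb unfolding A_def by (metis less_eq_real_def empty_Collect_eq)
      then have "p = 0" by (simp add: vec_eq_iff)
      then show False using pnf[rule_format, of orig] od by (simp add: netflow_zero)
    qed
    have finA: "finite A" by simp
    define M where "M = Min ((\<lambda>a. x $ a / p $ a) ` A)"
    have Mpos: "M > 0" unfolding M_def using \<open>A \<noteq> {}\<close> finA pb
      by (subst Min_gr_iff) (auto simp: A_def)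
    have Mle: "M \<le> x $ a / p $ a" if "a \<in> A" for a
      unfolding M_def using finA that by (intro Min_le) auto
    define l where "l = min v M"
    have lpos: "l > 0" using vpos Mpos by (simp add: l_def)
    have lp_le: "l * p $ a \<le> x $ a" for a
    proof (cases "a \<in> A")
      case True
      then have "p $ a > 0" by (simp add: A_def)
      have "l \<le> x $ a / p $ a" using Mle[OF True] by (simp add: l_def)
      then show ?thesis using \<open>p $ a > 0\<close> by (simp add: pos_le_divide_eq)
    next
      case False
      then have "p $ a = 0" using pb by (auto simp: A_def intro: antisym)
      then show ?thesis using xnn by simp
    qed
    define x' where "x' = x - l *\<^sub>R p"
    have x'nn: "\<forall>a. 0 \<le> x' $ a" using lp_le by (simp add: x'_def)
    have x'nf: "\<forall>i. netflow src tgt x' i = (if i = orig then v - l else if i = dest then -(v - l) else 0)"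
      using xnf pnf od by (auto simp: x'_def netflow_diff netflow_scale)
    show ?thesis
    proof (cases "l = v")
      case True
      show ?thesis
      proof (intro bexI[of _ "v *\<^sub>R p"] allI conjI)
        show "v *\<^sub>R p \<in> flv src tgt orig dest v"
          using pnf pb od vpos by (auto simp: flv_def netflow_scale)
      next
        fix a show "(v *\<^sub>R p) $ a \<le> x $ a" using lp_le[of a] True by simp
        have "v * p $ a \<le> v * real n" using pb vpos by (intro mult_left_mono) auto
        also have "\<dots> \<le> v * ?K" using nK vpos by (intro mult_left_mono) auto
        finally show "(v *\<^sub>R p) $ a \<le> v * ?K" by simp
      qed
    next
      case False
      then have lM: "l = M" and lv: "l < v" using l_def by (auto simp: min_def split: if_splits)
      have "M \<in> (\<lambda>a. x $ a / p $ a) ` A" unfolding M_def using finA \<open>A \<noteq> {}\<close> by (intro Min_in) auto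
      then obtain a0 where a0: "a0 \<in> A" "M = x $ a0 / p $ a0" by blast
      have pa0: "p $ a0 > 0" using a0 by (simp add: A_def)
      have "x' $ a0 = 0" using a0 pa0 lM by (simp add: x'_def)
      have xa0: "x $ a0 > 0" using pb pa0 by blast
      have sub: "{a. 0 < x' $ a} \<subset> {a. 0 < x $ a}"
      proof
        show "{a. 0 < x' $ a} \<subseteq> {a. 0 < x $ a}"
          using pb lpos by (auto simp: x'_def) (smt (verit) mult_nonneg_nonneg)
        show "{a. 0 < x' $ a} \<noteq> {a. 0 < x $ a}" using \<open>x' $ a0 = 0\<close> xa0 by (metis less_irrefl mem_Collect_eq)
      qed
      have "card {a. 0 < x' $ a} < card {a. 0 < x $ a}" by (rule psubset_card_mono) (use sub in auto)
      moreover have "x' \<in> flv src tgt orig dest (v - l)" using x'nn x'nf by (simp add: flv_def)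
      ultimately obtain y' where y': "y' \<in> flv src tgt orig dest (v - l)"
        "\<forall>a. y' $ a \<le> x' $ a \<and> y' $ a \<le> (v - l) * ?K"
        using less.hyps lv by fastforce
      show ?thesis
      proof (intro bexI[of _ "y' + l *\<^sub>R p"] allI conjI)
        show "y' + l *\<^sub>R p \<in> flv src tgt orig dest v"
          using y'(1) pnf pb od lpos by (auto simp: flv_def netflow_scale netflow_add)
      next
        fix a show "(y' + l *\<^sub>R p) $ a \<le> x $ a" using y'(2)[rule_format, of a] by (simp add: x'_def)
        have "l * p $ a \<le> l * real n" using pb lpos by (intro mult_left_mono) auto
        also have "\<dots> \<le> l * ?K" using nK lpos by (intro mult_left_mono) auto
        finally show "(y' + l *\<^sub>R p) $ a \<le> v * ?K" using y'(2)[rule_format, of a]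
          by (simp add: algebra_simps)
      qed
    qed
  qed
qed




lemma restr_add: "restr s (x + y) = restr s x + restr s y"
  by (simp add: restr_def vec_eq_iff)
lemma restr_scale: "restr s (u *\<^sub>R x) = u *\<^sub>R restr s x"
  by (simp add: restr_def vec_eq_iff)
lemma restr_nth [simp]: "restr s x $ k = x $ s k"
  by (simp add: restr_def)

lemma inner_mono_nonneg:
  fixes t x y :: "real^'n::finite"
  assumes "\<forall>k. 0 \<le> t $ k" "\<forall>k. x $ k \<le> y $ k"
  shows "t \<bullet> x \<le> t \<bullet> y"
  unfolding inner_vec_def using assms by (intro sum_mono) (simp add: mult_left_mono)

lemma inner_nonneg_vec:
  fixes t x :: "real^'n::finite"
  assumes "\<forall>k. 0 \<le> t $ k" "\<forall>k. 0 \<le> x $ k"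
  shows "0 \<le> t \<bullet> x"
  unfolding inner_vec_def using assms by (intro sum_nonneg) simp

lemma polyhedron_flows:
  fixes src tgt :: "'a::finite \<Rightarrow> 'v::finite"
  shows "polyhedron (flows src tgt orig dest)"
proof -
  define N :: "'v \<Rightarrow> real^'a" where
    "N i = (\<chi> a. (if src a = i then 1 else 0) - (if tgt a = i then 1 else 0))" for i
  define b :: "'v \<Rightarrow> real" where "b i = (if i = orig then 1 else if i = dest then -1 else 0)" for i
  have eq: "flows src tgt orig dest = \<Inter>(range (\<lambda>i. {x. N i \<bullet> x = b i})) \<inter> \<Inter>(range (\<lambda>a. {x. axis a 1 \<bullet> x \<ge> (0::real)}))"
  proof -
    have "N i \<bullet> x = netflow src tgt x i" for i x
      unfolding N_def netflow_def inner_vec_def by (simp add: mult.commute)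
    moreover have "axis a 1 \<bullet> x = x $ a" for a and x :: "real^'a"
      by (simp add: inner_commute inner_axis)
    ultimately show ?thesis unfolding flows_eq flv_def b_def by auto
  qed
  show ?thesis unfolding eq
    by (intro polyhedron_Int polyhedron_Inter) (auto simp: polyhedron_hyperplane polyhedron_halfspace_ge)
qed

locale npp =
  fixes src tgt :: "'a::finite \<Rightarrow> 'v::finite" and \<sigma> :: "'k::finite \<Rightarrow> 'a" and c :: "real^'a"
    and orig dest :: 'v
  assumes od: "orig \<noteq> dest" and cnn: "\<forall>a. 0 \<le> c $ a"
    and Xne: "flows src tgt orig dest \<noteq> {}"
begin

abbreviation "X \<equiv> flows src tgt orig dest"
abbreviation "f \<equiv> fval src tgt orig dest \<sigma> c"
abbreviation "g \<equiv> gfun src tgt orig dest \<sigma> c"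
definition "KK = real CARD('v \<times> 'v)"
definition "BB = {x \<in> X. \<forall>a. x $ a \<le> KK}"

lemma X_nonneg: "x \<in> X \<Longrightarrow> 0 \<le> x $ a"
  by (simp add: flows_def)

lemma dom1: "x \<in> X \<Longrightarrow> \<exists>y\<in>BB. \<forall>a. y $ a \<le> x $ a"
proof -
  assume "x \<in> X"
  then obtain y where "y \<in> flv src tgt orig dest 1" "\<forall>a. y $ a \<le> x $ a \<and> y $ a \<le> 1 * real CARD('v \<times> 'v)"
    using dominate[OF od, where x=x and v=1 and src=src and tgt=tgt] by (auto simp: flows_eq)
  then show ?thesis unfolding BB_def KK_def flows_eq by auto
qed

lemma convex_X: "convex X" and closed_X: "closed X"
  using polyhedron_flows polyhedron_imp_convex polyhedron_imp_closed by blast+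

lemma BB_sub: "BB \<subseteq> X" by (auto simp: BB_def)

lemma BB_eq: "BB = X \<inter> cbox 0 (\<chi> _. KK)"
  by (auto simp: BB_def mem_box_cart X_nonneg)

lemma polytope_BB: "polytope BB"
  unfolding polytope_eq_bounded_polyhedron BB_eq
  by (auto intro: polyhedron_flows bounded_subset[OF bounded_cbox])

lemma compact_BB: "compact BB" and convex_BB: "convex BB" and bounded_BB: "bounded BB"
  using polytope_BB polytope_imp_compact polytope_imp_convex polytope_imp_bounded by blast+

lemma BB_ne: "BB \<noteq> {}" using Xne dom1 by blast

lemma cost_mono:
  assumes "\<forall>k. 0 \<le> t $ k" "\<forall>a. y $ a \<le> x $ a"
  shows "c \<bullet> y + t \<bullet> restr \<sigma> y \<le> c \<bullet> x + t \<bullet> restr \<sigma> x"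
proof -
  have "c \<bullet> y \<le> c \<bullet> x" using cnn assms(2) by (rule inner_mono_nonneg)
  moreover have "t \<bullet> restr \<sigma> y \<le> t \<bullet> restr \<sigma> x" using assms by (intro inner_mono_nonneg) auto
  ultimately show ?thesis by simp
qed

lemma f_ge:
  assumes "\<forall>k. 0 \<le> t $ k" "\<forall>y\<in>BB. M \<le> c \<bullet> y + t \<bullet> restr \<sigma> y"
  shows "ereal M \<le> f t"
  unfolding fval_def using assms(1)
proof (simp, intro INF_greatest)
  fix x assume "x \<in> X"
  then obtain y where "y \<in> BB" "\<forall>a. y $ a \<le> x $ a" using dom1 by blast
  then show "ereal M \<le> ereal (c \<bullet> x + t \<bullet> restr \<sigma> x)"
    using assms cost_mono[OF assms(1)] by (meson ereal_less_eq(3) order_trans)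
qed

lemma f_le:
  assumes "\<forall>k. 0 \<le> t $ k" "x \<in> X"
  shows "f t \<le> ereal (c \<bullet> x + t \<bullet> restr \<sigma> x)"
proof -
  have "(INF x\<in>X. ereal (c \<bullet> x + t \<bullet> restr \<sigma> x)) \<le> ereal (c \<bullet> x + t \<bullet> restr \<sigma> x)"
    by (rule INF_lower[OF assms(2)])
  then show ?thesis unfolding fval_def using assms(1) by simp
qed

lemma f_neg: "\<not> (\<forall>k. 0 \<le> t $ k) \<Longrightarrow> f t = -\<infinity>"
  unfolding fval_def by auto

lemma g_ge: "f t - ereal (t \<bullet> u) \<le> g u"
  unfolding gfun_def by (rule SUP_upper) simp

lemma weak:
  assumes "y \<in> X" "\<forall>k. restr \<sigma> y $ k \<le> u $ k"
  shows "g u \<le> ereal (c \<bullet> y)"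
  unfolding gfun_def
proof (rule SUP_least)
  fix t :: "real^'k"
  show "f t - ereal (t \<bullet> u) \<le> ereal (c \<bullet> y)"
  proof (cases "\<forall>k. 0 \<le> t $ k")
    case True
    have "t \<bullet> restr \<sigma> y \<le> t \<bullet> u" using True assms(2) by (rule inner_mono_nonneg)
    have "f t - ereal (t \<bullet> u) \<le> ereal (c \<bullet> y + t \<bullet> restr \<sigma> y) - ereal (t \<bullet> u)"
      using f_le[OF True assms(1)] by (rule ereal_minus_mono) simp
    also have "\<dots> \<le> ereal (c \<bullet> y)" using \<open>t \<bullet> restr \<sigma> y \<le> t \<bullet> u\<close> by simp
    finally show ?thesis .
  next
    case False then show ?thesis by (simp add: f_neg)
  qed
qed

lemma g_anti:
  assumes "\<forall>k. u $ k \<le> u' $ k"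
  shows "g u' \<le> g u"
  unfolding gfun_def
proof (rule SUP_mono)
  fix t :: "real^'k"
  show "\<exists>t'\<in>UNIV. f t - ereal (t \<bullet> u') \<le> f t' - ereal (t' \<bullet> u)"
  proof (cases "\<forall>k. 0 \<le> t $ k")
    case True
    have "t \<bullet> u \<le> t \<bullet> u'" using True assms by (rule inner_mono_nonneg)
    then show ?thesis by (intro bexI[of _ t]) (auto intro: ereal_minus_mono)
  next
    case False then show ?thesis by (simp add: f_neg)
  qed
qed

lemma g_nonneg: "0 \<le> g u"
proof -
  have "0 \<le> f 0"
    unfolding fval_def by (auto intro!: INF_greatest inner_nonneg_vec simp: cnn X_nonneg)
  also have "f 0 = f 0 - ereal (0 \<bullet> u)" by (simp add: zero_ereal_def)
  also have "\<dots> \<le> g u" by (rule g_ge)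
  finally show ?thesis .
qed

lemma g_lower:
  assumes "\<forall>k. 0 \<le> t $ k" "\<forall>y\<in>BB. \<gamma> + t \<bullet> w \<le> c \<bullet> y + t \<bullet> restr \<sigma> y"
  shows "ereal \<gamma> \<le> g w"
proof -
  have "ereal (\<gamma> + t \<bullet> w) \<le> f t" using f_ge[OF assms] .
  then have "ereal (\<gamma> + t \<bullet> w) - ereal (t \<bullet> w) \<le> f t - ereal (t \<bullet> w)"
    by (rule ereal_minus_mono) simp
  also have "\<dots> \<le> g w" by (rule g_ge)
  finally show ?thesis by simp
qed

end



context npp begin

lemma farkas:
  fixes w :: "real^'k" and \<gamma> :: real
  assumes H: "\<not> (\<exists>y\<in>BB. (\<forall>k. restr \<sigma> y $ k \<le> w $ k) \<and> c \<bullet> y < \<gamma>)"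
  shows "\<exists>t. (\<forall>k. 0 \<le> t $ k) \<and> (\<forall>y\<in>BB. \<gamma> + t \<bullet> w \<le> c \<bullet> y + t \<bullet> restr \<sigma> y)"
proof -
  obtain V where finV: "finite V" and BV: "BB = convex hull V"
    using polytope_BB unfolding polytope_def by blast
  obtain y00 where y00: "y00 \<in> BB" using BB_ne by blast
  define Lm :: "real^'a \<Rightarrow> (real^'k) \<times> real" where "Lm y = (restr \<sigma> y - w, c \<bullet> y - \<gamma>)" for y
  define Gs :: "((real^'k) \<times> real) set" where
    "Gs = Lm ` V \<union> range (\<lambda>k. (axis k 1, 0)) \<union> {(0, 1)}"
  define G where "G = convex_cone hull Gs"
  define C :: "((real^'k) \<times> real) set" where
    "C = {p. \<exists>l\<ge>0. \<exists>y\<in>BB. (\<forall>k. l * (restr \<sigma> y $ k - w $ k) \<le> fst p $ k) \<and> l * (c \<bullet> y - \<gamma>) \<le> snd p}"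
  have ccC: "convex_cone C"
    unfolding convex_cone_iff
  proof (intro conjI ballI allI impI)
    show "0 \<in> C" unfolding C_def using y00 by (intro CollectI exI[of _ 0]) auto
  next
    fix p q assume "p \<in> C" "q \<in> C"
    then obtain l1 y1 l2 y2 where l1: "l1 \<ge> 0" "y1 \<in> BB" "\<forall>k. l1 * (restr \<sigma> y1 $ k - w $ k) \<le> fst p $ k"
      "l1 * (c \<bullet> y1 - \<gamma>) \<le> snd p"
      and l2: "l2 \<ge> 0" "y2 \<in> BB" "\<forall>k. l2 * (restr \<sigma> y2 $ k - w $ k) \<le> fst q $ k"
      "l2 * (c \<bullet> y2 - \<gamma>) \<le> snd q"
      unfolding C_def by blast
    show "p + q \<in> C"
    proof (cases "l1 + l2 = 0")
      case True
      then have "l1 = 0" "l2 = 0" using l1 l2 by auto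
      then show ?thesis unfolding C_def using l1 l2 y00
        by (intro CollectI exI[of _ 0]) (auto intro!: add_nonneg_nonneg)
    next
      case False
      define s where "s = l1 + l2"
      have spos: "s > 0" using False l1 l2 by (simp add: s_def)
      define y where "y = (l1 / s) *\<^sub>R y1 + (l2 / s) *\<^sub>R y2"
      have yB: "y \<in> BB" unfolding y_def using convex_BB l1 l2 spos
        by (intro convexD) (auto simp: s_def add_divide_distrib[symmetric])
      have e0: "s * (restr \<sigma> y $ k) = l1 * restr \<sigma> y1 $ k + l2 * restr \<sigma> y2 $ k" for k
        using spos by (simp add: y_def distrib_left)
      have e1: "s * (restr \<sigma> y $ k - w $ k) = l1 * (restr \<sigma> y1 $ k - w $ k) + l2 * (restr \<sigma> y2 $ k - w $ k)" for k
      proof -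
        have "s * (restr \<sigma> y $ k - w $ k) = s * (restr \<sigma> y $ k) - s * w $ k" by (simp add: right_diff_distrib)
        also have "\<dots> = l1 * restr \<sigma> y1 $ k + l2 * restr \<sigma> y2 $ k - (l1 * w $ k + l2 * w $ k)"
          by (subst e0[symmetric]) (simp add: s_def distrib_right)
        finally show ?thesis by (simp add: right_diff_distrib)
      qed
      have e3: "s * (c \<bullet> y) = l1 * (c \<bullet> y1) + l2 * (c \<bullet> y2)"
        using spos by (simp add: y_def distrib_left inner_add_right)
      have e2: "s * (c \<bullet> y - \<gamma>) = l1 * (c \<bullet> y1 - \<gamma>) + l2 * (c \<bullet> y2 - \<gamma>)"
      proof -
        have "s * (c \<bullet> y - \<gamma>) = s * (c \<bullet> y) - s * \<gamma>" by (simp add: right_diff_distrib)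
        also have "\<dots> = l1 * (c \<bullet> y1) + l2 * (c \<bullet> y2) - (l1 * \<gamma> + l2 * \<gamma>)"
          by (subst e3[symmetric]) (simp add: s_def distrib_right)
        finally show ?thesis by (simp add: right_diff_distrib)
      qed
      show ?thesis unfolding C_def
      proof (intro CollectI exI[of _ s] conjI bexI[OF _ yB] allI)
        show "0 \<le> s" using spos by simp
        fix k show "s * (restr \<sigma> y $ k - w $ k) \<le> fst (p + q) $ k"
          using e1[of k] l1(3) l2(3) by (simp add: add_mono)
      next
        show "s * (c \<bullet> y - \<gamma>) \<le> snd (p + q)" using e2 l1(4) l2(4) by simp
      qed
    qed
  next
    fix p and d :: real assume "p \<in> C" "0 \<le> d"
    then obtain l y where l: "l \<ge> 0" "y \<in> BB" "\<forall>k. l * (restr \<sigma> y $ k - w $ k) \<le> fst p $ k"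
      "l * (c \<bullet> y - \<gamma>) \<le> snd p" unfolding C_def by blast
    show "d *\<^sub>R p \<in> C" unfolding C_def
    proof (intro CollectI exI[of _ "d * l"] conjI bexI[OF _ l(2)] allI)
      show "0 \<le> d * l" using l \<open>0 \<le> d\<close> by simp
      fix k show "d * l * (restr \<sigma> y $ k - w $ k) \<le> fst (d *\<^sub>R p) $ k"
        using mult_left_mono[OF l(3)[rule_format, of k] \<open>0 \<le> d\<close>] by (simp add: mult.assoc)
    next
      show "d * l * (c \<bullet> y - \<gamma>) \<le> snd (d *\<^sub>R p)"
        using mult_left_mono[OF l(4) \<open>0 \<le> d\<close>] by (simp add: mult.assoc)
    qed
  qed
  have "Gs \<subseteq> C"
  proof -
    have "Lm y \<in> C" if "y \<in> V" for y
    proof -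
      have "y \<in> BB" unfolding BV using that by (rule hull_inc)
      then show ?thesis unfolding C_def Lm_def by (intro CollectI exI[of _ 1]) auto
    qed
    moreover have "(axis k 1, 0) \<in> C" for k
      unfolding C_def using y00 by (intro CollectI exI[of _ 0] conjI bexI[OF _ y00]) (auto simp: axis_def)
    moreover have "(0, 1) \<in> C"
      unfolding C_def using y00 by (intro CollectI exI[of _ 0] conjI bexI[OF _ y00]) auto
    ultimately show ?thesis unfolding Gs_def by blast
  qed
  then have GC: "G \<subseteq> C" unfolding G_def using ccC by (rule hull_minimal)
  have notin: "(0, -1) \<notin> G"
  proof
    assume "(0, -1) \<in> G"
    then have "(0, -1) \<in> C" using GC by blast
    then obtain l y where l: "l \<ge> 0" "y \<in> BB" "\<forall>k. l * (restr \<sigma> y $ k - w $ k) \<le> 0"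
      "l * (c \<bullet> y - \<gamma>) \<le> -1" unfolding C_def by auto
    have "l \<noteq> 0" using l(4) by auto
    then have lpos: "l > 0" using l(1) by simp
    have "\<forall>k. restr \<sigma> y $ k \<le> w $ k"
    proof
      fix k show "restr \<sigma> y $ k \<le> w $ k"
        using l(3)[rule_format, of k] lpos by (simp add: mult_le_0_iff)
    qed
    moreover have "c \<bullet> y < \<gamma>" using l(4) lpos
      by (smt (verit, best) mult_nonneg_nonneg)
    ultimately show False using H l(2) by blast
  qed
  have finGs: "finite Gs" unfolding Gs_def using finV by simp
  have clG: "closed G" unfolding G_def using finGs by (rule closed_convex_cone_hull)
  have cvG: "convex G" unfolding G_def by (rule convex_convex_cone_hull)
  obtain a b where ab: "inner a (0, -1) < b" "\<forall>x\<in>G. b < inner a x"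
    using separating_hyperplane_closed_point[OF cvG clG notin] by blast
  have "0 \<in> G" unfolding G_def by (rule convex_cone_hull_contains_0)
  then have bneg: "b < 0" using ab(2) by fastforce
  have nonneg: "0 \<le> inner a x" if "x \<in> G" for x
  proof (rule ccontr)
    assume "\<not> 0 \<le> inner a x"
    then have neg: "inner a x < 0" by simp
    define s where "s = b / inner a x"
    have "s \<ge> 0" using neg bneg by (simp add: s_def divide_nonpos_neg less_imp_le)
    then have "s *\<^sub>R x \<in> G" unfolding G_def
      using convex_cone_scaleR[OF convex_cone_convex_cone_hull _ that[unfolded G_def]] by blast
    then have "b < inner a (s *\<^sub>R x)" using ab(2) by blast
    also have "inner a (s *\<^sub>R x) = b" using neg by (simp add: s_def)
    finally show False by simp
  qed
  obtain av az where aeq: "a = (av, az)" by (cases a)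
  have GsG: "Gs \<subseteq> G" unfolding G_def by (rule hull_subset)
  have azpos: "az > 0" using ab(1) bneg by (simp add: aeq)
  have avnn: "0 \<le> av $ k" for k
  proof -
    have "(axis k 1, 0) \<in> G" using GsG unfolding Gs_def by blast
    from nonneg[OF this] show ?thesis by (simp add: aeq inner_axis)
  qed
  define S0 where "S0 = {y. 0 \<le> av \<bullet> (restr \<sigma> y - w) + az * (c \<bullet> y - \<gamma>)}"
  have "V \<subseteq> S0"
  proof
    fix y assume "y \<in> V"
    then have "Lm y \<in> G" using GsG unfolding Gs_def by blast
    from nonneg[OF this] show "y \<in> S0" by (simp add: aeq Lm_def S0_def)
  qed
  moreover have "convex S0"
  proof (rule convexI)
    fix x y :: "real^'a" and u v :: real
    assume hx': "x \<in> S0" and hy': "y \<in> S0"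
      and u: "0 \<le> u" and v: "0 \<le> v" and uv: "u + v = 1"
    have hx: "0 \<le> av \<bullet> (restr \<sigma> x - w) + az * (c \<bullet> x - \<gamma>)" using hx' by (simp add: S0_def)
    have hy: "0 \<le> av \<bullet> (restr \<sigma> y - w) + az * (c \<bullet> y - \<gamma>)" using hy' by (simp add: S0_def)
    have eq: "av \<bullet> (restr \<sigma> (u *\<^sub>R x + v *\<^sub>R y) - w) + az * (c \<bullet> (u *\<^sub>R x + v *\<^sub>R y) - \<gamma>)
      = u * (av \<bullet> (restr \<sigma> x - w) + az * (c \<bullet> x - \<gamma>)) + v * (av \<bullet> (restr \<sigma> y - w) + az * (c \<bullet> y - \<gamma>))"
    proof -
      have vv: "v = 1 - u" using uv by simp
      have r: "restr \<sigma> (u *\<^sub>R x + v *\<^sub>R y) = u *\<^sub>R restr \<sigma> x + v *\<^sub>R restr \<sigma> y"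
        by (simp add: restr_add restr_scale)
      have cc: "c \<bullet> (u *\<^sub>R x + v *\<^sub>R y) = u * (c \<bullet> x) + v * (c \<bullet> y)"
        by (simp add: inner_add_right)
      show ?thesis unfolding r cc unfolding vv
        by (simp add: inner_diff_right inner_add_right algebra_simps)
    qed
    show "u *\<^sub>R x + v *\<^sub>R y \<in> S0"
      unfolding S0_def mem_Collect_eq eq using hx hy u v by simp
  qed
  ultimately have BS0: "BB \<subseteq> S0" unfolding BV by (rule hull_minimal)
  define t where "t = (1 / az) *\<^sub>R av"
  show ?thesis
  proof (intro exI[of _ t] conjI allI ballI)
    fix k show "0 \<le> t $ k" using avnn azpos by (simp add: t_def)
  next
    fix y assume "y \<in> BB"
    then have "0 \<le> av \<bullet> (restr \<sigma> y - w) + az * (c \<bullet> y - \<gamma>)" using BS0 S0_def by blast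
    then have "0 \<le> (av \<bullet> (restr \<sigma> y - w) + az * (c \<bullet> y - \<gamma>)) / az" using azpos by simp
    also have "\<dots> = (c \<bullet> y + t \<bullet> restr \<sigma> y) - (\<gamma> + t \<bullet> w)"
      using azpos by (simp add: t_def field_simps inner_diff_right)
    finally show "\<gamma> + t \<bullet> w \<le> c \<bullet> y + t \<bullet> restr \<sigma> y" by simp
  qed
qed

end



context npp begin

lemma closed_le_w: "closed {y::real^'a. \<forall>k. restr \<sigma> y $ k \<le> w $ k}"
proof -
  have "{y::real^'a. \<forall>k. restr \<sigma> y $ k \<le> w $ k} = (\<Inter>k. {y. axis (\<sigma> k) 1 \<bullet> y \<le> w $ k})"
    by (auto simp: inner_commute inner_axis)
  then show ?thesis by (simp add: closed_INT closed_halfspace_le)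
qed

lemma strong:
  assumes gw: "g w = ereal g0"
  shows "\<exists>x\<in>BB. (\<forall>k. restr \<sigma> x $ k \<le> w $ k) \<and> c \<bullet> x \<le> g0"
proof (rule ccontr)
  assume nx: "\<not> ?thesis"
  define Y where "Y = BB \<inter> {y. \<forall>k. restr \<sigma> y $ k \<le> w $ k}"
  show False
  proof (cases "Y = {}")
    case True
    have "\<not> (\<exists>y\<in>BB. (\<forall>k. restr \<sigma> y $ k \<le> w $ k) \<and> c \<bullet> y < g0 + 1)" using True Y_def by auto
    from farkas[OF this] obtain t where "\<forall>k. 0 \<le> t $ k" "\<forall>y\<in>BB. g0 + 1 + t \<bullet> w \<le> c \<bullet> y + t \<bullet> restr \<sigma> y"
      by blast
    from g_lower[OF this] have "ereal (g0 + 1) \<le> g w" .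
    then show False using gw by simp
  next
    case False
    have "compact Y" unfolding Y_def using compact_BB closed_le_w by (rule compact_Int_closed)
    moreover have "continuous_on Y (\<lambda>y. c \<bullet> y)" by (intro continuous_intros)
    ultimately obtain x where x: "x \<in> Y" "\<forall>y\<in>Y. c \<bullet> x \<le> c \<bullet> y"
      using continuous_attains_inf[OF _ False] by blast
    have "c \<bullet> x > g0" using nx x(1) by (auto simp: Y_def)
    have "\<not> (\<exists>y\<in>BB. (\<forall>k. restr \<sigma> y $ k \<le> w $ k) \<and> c \<bullet> y < c \<bullet> x)"
      using x(2) by (auto simp: Y_def not_less)
    from farkas[OF this] obtain t where "\<forall>k. 0 \<le> t $ k" "\<forall>y\<in>BB. c \<bullet> x + t \<bullet> w \<le> c \<bullet> y + t \<bullet> restr \<sigma> y"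
      by blast
    from g_lower[OF this] have "ereal (c \<bullet> x) \<le> g w" .
    then show False using gw \<open>c \<bullet> x > g0\<close> by simp
  qed
qed

end

theorem proposition4:
  fixes src tgt :: "'a::finite \<Rightarrow> 'v::finite"
    and \<sigma> :: "'k::finite \<Rightarrow> 'a"
    and c :: "real^'a"
    and orig dest :: 'v
    and w :: "real^'k"
  assumes simple: "inj (\<lambda>a. (src a, tgt a))"
    and inj_sigma: "inj \<sigma>"
    and proper: "range \<sigma> \<noteq> UNIV"
    and c_nonneg: "\<forall>a. 0 \<le> c $ a"
    and od: "orig \<noteq> dest"
    and tollfree: "(orig, dest) \<in> {(src a, tgt a) | a. a \<notin> range \<sigma>}\<^sup>*"
    and w_nonneg: "\<forall>k. 0 \<le> w $ k"
    and sbf: "strongly_bilevel_feasible src tgt orig dest \<sigma> c w"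
  shows "\<exists>x. x extreme_point_of flows src tgt orig dest
             \<and> bilevel_feasible src tgt orig dest \<sigma> c x
             \<and> restr \<sigma> x = w"
proof -
  have Xne: "flows src tgt orig dest \<noteq> {}"
  proof -
    let ?E = "{(src a, tgt a) | a. a \<notin> range \<sigma>}"
    have "finite ?E" by simp
    from tollfree obtain n where "(orig, dest) \<in> ?E ^^ n"
      unfolding rtrancl_finite_eq_relpow[OF \<open>finite ?E\<close>] by blast
    from walk_vec[OF this] obtain p :: "real^'a" where
      p: "\<forall>i. netflow src tgt p i = (if i = orig then 1 else 0) - (if i = dest then 1 else 0)"
      "\<forall>a. 0 \<le> p $ a \<and> p $ a \<le> real n \<and> (0 < p $ a \<longrightarrow> a \<notin> range \<sigma>)" by blast
    have "p \<in> flows src tgt orig dest" unfolding flows_eq flv_def using p od by auto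
    then show ?thesis by blast
  qed
  interpret npp src tgt \<sigma> c orig dest
    using od c_nonneg Xne by unfold_locales
  obtain F where F: "F face_of epi g" "(0, 1) \<notin> dirspace F" "{w} = {w'. \<exists>z. (w', z) \<in> F}"
    using sbf unfolding strongly_bilevel_feasible_def reaction_set_def by blast
  have "w \<in> {w'. \<exists>z. (w', z) \<in> F}" using F(3) by blast
  then obtain z0 where z0F: "(w, z0) \<in> F" by blast
  have Fsing: "F = {(w, z0)}"
  proof
    show "{(w, z0)} \<subseteq> F" using z0F by simp
    show "F \<subseteq> {(w, z0)}"
    proof
      fix q assume "q \<in> F"
      obtain u z where q: "q = (u, z)" by (cases q)
      have "u \<in> {w'. \<exists>z. (w', z) \<in> F}" using \<open>q \<in> F\<close> q by blast
      then have "u = w" using F(3) by blast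
      have "z = z0"
      proof (rule ccontr)
        assume "z \<noteq> z0"
        define s where "s = 1 / (z - z0)"
        have A1: "(w, z0) \<in> affine hull F" using z0F by (rule hull_inc)
        have A2: "(w, z) \<in> affine hull F" using \<open>q \<in> F\<close> q \<open>u = w\<close> by (auto intro: hull_inc)
        have "(1 - s) *\<^sub>R (w, z0) + s *\<^sub>R (w, z) \<in> affine hull F"
          by (rule mem_affine[OF affine_affine_hull A1 A2]) simp
        moreover have "(1 - s) *\<^sub>R (w, z0) + s *\<^sub>R (w, z) = (w, z0 + 1)"
        proof -
          have "s * (z - z0) = 1" using \<open>z \<noteq> z0\<close> by (simp add: s_def)
          then have "(1 - s) * z0 + s * z = z0 + 1" by (simp add: algebra_simps)
          moreover have "(1 - s) *\<^sub>R w + s *\<^sub>R w = w" by (simp add: scaleR_left_distrib[symmetric])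
          ultimately show ?thesis by simp
        qed
        ultimately have A3: "(w, z0 + 1) \<in> affine hull F" by simp
        have "(0::real^'k, 1::real) = (w, z0 + 1) - (w, z0)" by simp
        then have "(0::real^'k, 1::real) \<in> dirspace F" unfolding dirspace_def using A1 A3 by blast
        then show False using F(2) by simp
      qed
      then show "q \<in> {(w, z0)}" using q \<open>u = w\<close> by simp
    qed
  qed
  have "(w, z0) extreme_point_of epi g" using F(1) unfolding Fsing face_of_singleton .
  then have inE: "(w, z0) \<in> epi g" and ext0: "\<forall>a\<in>epi g. \<forall>b\<in>epi g. (w, z0) \<notin> open_segment a b"
    unfolding extreme_point_of_def by auto
  have gw_le: "g w \<le> ereal z0" using inE by (simp add: epi_def)
  define g0 where "g0 = real_of_ereal (g w)"
  have gw: "g w = ereal g0" using g_nonneg[of w] gw_le unfolding g0_def by (cases "g w") auto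
  have "g0 = z0"
  proof (rule ccontr)
    assume "g0 \<noteq> z0"
    then have lt: "g0 < z0" using gw gw_le by simp
    have a: "(w, g0) \<in> epi g" using gw by (simp add: epi_def)
    have b: "(w, 2 * z0 - g0) \<in> epi g" using gw lt by (simp add: epi_def)
    have "midpoint (w, g0) (w, 2 * z0 - g0) = (w, z0)"
    proof -
      have m1: "(1/2) *\<^sub>R (w + w) = w" by (simp add: scaleR_2[symmetric])
      have m2: "(1/2) *\<^sub>R (g0 + (2 * z0 - g0)) = z0" by simp
      show ?thesis unfolding midpoint_def add_Pair scaleR_Pair m1 m2 by simp
    qed
    moreover have "midpoint (w, g0) (w, 2 * z0 - g0) \<in> open_segment (w, g0) (w, 2 * z0 - g0)"
      using lt by simp
    ultimately show False using ext0 a b by metis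
  qed
  then have ext: "\<forall>a\<in>epi g. \<forall>b\<in>epi g. (w, g0) \<notin> open_segment a b" using ext0 by simp
  have EQ: "restr \<sigma> y = w \<and> c \<bullet> y = g0"
    if y: "y \<in> X" "\<forall>k. restr \<sigma> y $ k \<le> w $ k" "c \<bullet> y \<le> g0" for y
  proof -
    have a: "(restr \<sigma> y, c \<bullet> y) \<in> epi g" using weak[OF y(1), of "restr \<sigma> y"] by (simp add: epi_def)
    have h1: "g (2 *\<^sub>R w - restr \<sigma> y) \<le> g w" using y(2) by (intro g_anti) (auto simp: algebra_simps)
    have h2: "ereal g0 \<le> ereal (2 * g0 - c \<bullet> y)" using y(3) by simp
    have "g (2 *\<^sub>R w - restr \<sigma> y) \<le> ereal (2 * g0 - c \<bullet> y)" using order_trans[OF h1[unfolded gw] h2] .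
    then have b: "(2 *\<^sub>R w - restr \<sigma> y, 2 * g0 - c \<bullet> y) \<in> epi g" by (simp add: epi_def)
    have mid: "midpoint (restr \<sigma> y, c \<bullet> y) (2 *\<^sub>R w - restr \<sigma> y, 2 * g0 - c \<bullet> y) = (w, g0)"
    proof -
      have m1: "(1/2) *\<^sub>R (restr \<sigma> y + (2 *\<^sub>R w - restr \<sigma> y)) = w" by simp
      have m2: "(1/2) *\<^sub>R (c \<bullet> y + (2 * g0 - c \<bullet> y)) = g0" by simp
      show ?thesis unfolding midpoint_def add_Pair scaleR_Pair m1 m2 by simp
    qed
    have "(restr \<sigma> y, c \<bullet> y) = (2 *\<^sub>R w - restr \<sigma> y, 2 * g0 - c \<bullet> y)"
    proof (rule ccontr)
      assume "(restr \<sigma> y, c \<bullet> y) \<noteq> (2 *\<^sub>R w - restr \<sigma> y, 2 * g0 - c \<bullet> y)"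
      then have "(w, g0) \<in> open_segment (restr \<sigma> y, c \<bullet> y) (2 *\<^sub>R w - restr \<sigma> y, 2 * g0 - c \<bullet> y)"
        using mid midpoint_in_open_segment by metis
      then show False using ext a b by blast
    qed
    then have "restr \<sigma> y = 2 *\<^sub>R w - restr \<sigma> y" "c \<bullet> y = 2 * g0 - c \<bullet> y" by auto
    then show ?thesis by (auto simp: vec_eq_iff algebra_simps)
  qed
  obtain x where x: "x \<in> BB" "\<forall>k. restr \<sigma> x $ k \<le> w $ k" "c \<bullet> x \<le> g0" using strong[OF gw] by blast
  have xX: "x \<in> X" using x(1) BB_sub by blast
  have xS: "restr \<sigma> x = w" "c \<bullet> x = g0" using EQ[OF xX x(2,3)] by auto
  define Sw where "Sw = {y \<in> X. restr \<sigma> y = w \<and> c \<bullet> y = g0}"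
  have cvSw: "convex Sw"
  proof (rule convexI)
    fix y1 y2 :: "real^'a" and u v :: real
    assume "y1 \<in> Sw" "y2 \<in> Sw" "0 \<le> u" "0 \<le> v" "u + v = 1"
    then show "u *\<^sub>R y1 + v *\<^sub>R y2 \<in> Sw"
      using convexD[OF convex_X] unfolding Sw_def
      by (auto simp: restr_add restr_scale inner_add_right scaleR_left_distrib[symmetric] distrib_right[symmetric])
  qed
  have fSw: "Sw face_of X"
    unfolding face_of_def
  proof (intro conjI)
    show "Sw \<subseteq> X" by (auto simp: Sw_def)
    show "convex Sw" by (rule cvSw)
  next
    show "\<forall>a\<in>X. \<forall>b\<in>X. \<forall>y\<in>Sw. y \<in> open_segment a b \<longrightarrow> a \<in> Sw \<and> b \<in> Sw"
    proof (intro ballI impI)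
    fix a b y assume ab: "a \<in> X" "b \<in> X" "y \<in> Sw" "y \<in> open_segment a b"
    then obtain u where u: "0 < u" "u < 1" "y = (1 - u) *\<^sub>R a + u *\<^sub>R b" by (auto simp: in_segment)
    define La where "La = (restr \<sigma> a, c \<bullet> a)"
    define Lb where "Lb = (restr \<sigma> b, c \<bullet> b)"
    have LaE: "La \<in> epi g" unfolding La_def using weak[OF ab(1), of "restr \<sigma> a"] by (simp add: epi_def)
    have LbE: "Lb \<in> epi g" unfolding Lb_def using weak[OF ab(2), of "restr \<sigma> b"] by (simp add: epi_def)
    have comb: "(w, g0) = (1 - u) *\<^sub>R La + u *\<^sub>R Lb"
      using ab(3) u(3) unfolding Sw_def La_def Lb_def
      by (auto simp: restr_add restr_scale inner_add_right)
    have "La = Lb"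
    proof (rule ccontr)
      assume "La \<noteq> Lb"
      then have "(w, g0) \<in> open_segment La Lb" using comb u by (auto simp: in_segment)
      then show False using ext LaE LbE by blast
    qed
    then have "La = (w, g0)" using comb by (simp add: scaleR_left_distrib[symmetric])
    then show "a \<in> Sw \<and> b \<in> Sw" using \<open>La = Lb\<close> ab(1,2) unfolding Sw_def La_def Lb_def by auto
  qed
  qed
  have clSw: "closed Sw" using convex_X closed_X fSw by (rule face_of_imp_closed)
  define one :: "real^'a" where "one = (\<chi> _. 1)"
  have one_nn: "\<forall>a. 0 \<le> one $ a" by (simp add: one_def)
  have domS: "\<exists>y'\<in>Sw \<inter> BB. \<forall>a. y' $ a \<le> y $ a" if "y \<in> Sw" for y
  proof -
    have yX: "y \<in> X" using that by (simp add: Sw_def)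
    obtain y' where y': "y' \<in> BB" "\<forall>a. y' $ a \<le> y $ a" using dom1[OF yX] by blast
    have y'X: "y' \<in> X" using y'(1) BB_sub by blast
    have "\<forall>k. restr \<sigma> y' $ k \<le> w $ k" using y'(2) that by (auto simp: Sw_def)
    moreover have "c \<bullet> y' \<le> g0" using inner_mono_nonneg[OF cnn y'(2)] that by (simp add: Sw_def)
    ultimately have "y' \<in> Sw" using EQ[OF y'X] y'X by (simp add: Sw_def)
    then show ?thesis using y' by blast
  qed
  have cY2: "compact (Sw \<inter> BB)" using clSw compact_BB by (simp add: closed_Int_compact)
  have neY2: "Sw \<inter> BB \<noteq> {}" using x(1) xX xS by (auto simp: Sw_def)
  obtain y0 where y0: "y0 \<in> Sw \<inter> BB" "\<forall>y\<in>Sw \<inter> BB. one \<bullet> y0 \<le> one \<bullet> y"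
  proof -
    have "continuous_on (Sw \<inter> BB) (\<lambda>y. one \<bullet> y)" by (intro continuous_intros)
    from continuous_attains_inf[OF cY2 neY2 this] show ?thesis using that by blast
  qed
  define m where "m = one \<bullet> y0"
  have ge: "m \<le> one \<bullet> y" if yS: "y \<in> Sw" for y
  proof -
    obtain y' where y': "y' \<in> Sw \<inter> BB" "\<forall>a. y' $ a \<le> y $ a" using domS[OF yS] by blast
    have "m \<le> one \<bullet> y'" using y0(2) y'(1) by (simp add: m_def)
    also have "\<dots> \<le> one \<bullet> y" using one_nn y'(2) by (rule inner_mono_nonneg)
    finally show ?thesis .
  qed
  define S2 where "S2 = Sw \<inter> {y. one \<bullet> y = m}"
  have fS2: "S2 face_of Sw" unfolding S2_def using cvSw ge by (intro face_of_Int_supporting_hyperplane_ge) auto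
  have S2B: "S2 \<subseteq> BB"
  proof
    fix y assume "y \<in> S2"
    then have yS: "y \<in> Sw" and ym: "one \<bullet> y = m" by (auto simp: S2_def)
    obtain y' where y': "y' \<in> Sw \<inter> BB" "\<forall>a. y' $ a \<le> y $ a" using domS[OF yS] by blast
    have "m \<le> one \<bullet> y'" using ge y'(1) by blast
    then have d1: "one \<bullet> (y - y') \<le> 0" using ym by (simp add: inner_diff_right)
    have d2: "one \<bullet> (y - y') = (\<Sum>a\<in>UNIV. y $ a - y' $ a)" by (simp add: one_def inner_vec_def)
    have s0: "(\<Sum>a\<in>UNIV. y $ a - y' $ a) = 0"
    proof -
      have "0 \<le> (\<Sum>a\<in>UNIV. y $ a - y' $ a)" using y'(2) by (intro sum_nonneg) simp
      then show ?thesis using d1 d2 by linarith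
    qed
    have "\<forall>a\<in>UNIV. y $ a - y' $ a = 0"
      using sum_nonneg_eq_0_iff[of UNIV "\<lambda>a. y $ a - y' $ a"] s0 y'(2) by simp
    then have "y = y'" by (simp add: vec_eq_iff)
    then show "y \<in> BB" using y'(1) by simp
  qed
  have cS2: "compact S2"
    unfolding compact_eq_bounded_closed
    using bounded_subset[OF bounded_BB S2B] face_of_imp_closed[OF cvSw clSw fS2] by simp
  have neS2: "S2 \<noteq> {}" using y0(1) unfolding S2_def m_def by auto
  obtain e where e: "e extreme_point_of S2"
    using extreme_point_exists_convex[OF cS2 face_of_imp_convex[OF fS2] neS2] by blast
  have "{e} face_of X"
    using face_of_trans[OF face_of_trans[OF e[unfolded face_of_singleton[symmetric]] fS2] fSw] .
  then have eX: "e extreme_point_of X" by (simp add: face_of_singleton)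
  have "e \<in> S2" using e by (simp add: extreme_point_of_def)
  then have eS: "e \<in> X" "restr \<sigma> e = w" "c \<bullet> e = g0" by (auto simp: S2_def Sw_def)
  have "\<not> (\<exists>y\<in>BB. (\<forall>k. restr \<sigma> y $ k \<le> w $ k) \<and> c \<bullet> y < g0)"
  proof
    assume "\<exists>y\<in>BB. (\<forall>k. restr \<sigma> y $ k \<le> w $ k) \<and> c \<bullet> y < g0"
    then obtain y where "y \<in> BB" "\<forall>k. restr \<sigma> y $ k \<le> w $ k" "c \<bullet> y < g0" by blast
    then have "g w \<le> ereal (c \<bullet> y)" using weak BB_sub by blast
    then show False using gw \<open>c \<bullet> y < g0\<close> by simp
  qed
  from farkas[OF this] obtain t where t: "\<forall>k. 0 \<le> t $ k" "\<forall>y\<in>BB. g0 + t \<bullet> w \<le> c \<bullet> y + t \<bullet> restr \<sigma> y"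
    by blast
  have ft: "ereal (g0 + t \<bullet> w) \<le> f t" using f_ge[OF t] .
  have bf: "bilevel_feasible src tgt orig dest \<sigma> c e"
    unfolding bilevel_feasible_def
  proof (intro conjI)
    show "e \<in> X" by (rule eS(1))
    show "epi (\<lambda>t. - f t) \<subseteq> {(t, z). - (c \<bullet> e) - t \<bullet> restr \<sigma> e \<le> z}"
    proof
      fix q assume "q \<in> epi (\<lambda>t. - f t)"
      then obtain t' z where q: "q = (t', z)" "- f t' \<le> ereal z" by (auto simp: epi_def)
      show "q \<in> {(t, z). - (c \<bullet> e) - t \<bullet> restr \<sigma> e \<le> z}"
      proof (cases "\<forall>k. 0 \<le> t' $ k")
        case True
        have "f t' \<le> ereal (c \<bullet> e + t' \<bullet> restr \<sigma> e)" using f_le[OF True eS(1)] .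
        then have h: "- ereal (c \<bullet> e + t' \<bullet> restr \<sigma> e) \<le> - f t'" by (subst ereal_minus_le_minus)
        have "- ereal (c \<bullet> e + t' \<bullet> restr \<sigma> e) \<le> ereal z" using order_trans[OF h q(2)] .
        then show ?thesis using q(1) by simp
      next
        case False
        then show ?thesis using q(2) f_neg[OF False] by simp
      qed
    qed
    have "- f t \<le> ereal (- (c \<bullet> e) - t \<bullet> restr \<sigma> e)"
    proof -
      have "ereal (c \<bullet> e + t \<bullet> restr \<sigma> e) \<le> f t" using ft eS by simp
      then have "- f t \<le> - ereal (c \<bullet> e + t \<bullet> restr \<sigma> e)" by (subst ereal_minus_le_minus)
      then show ?thesis by simp
    qed
    then have "(t, - (c \<bullet> e) - t \<bullet> restr \<sigma> e) \<in> epi (\<lambda>t. - f t) \<inter> {(t, z). z = - (c \<bullet> e) - t \<bullet> restr \<sigma> e}"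
      by (simp add: epi_def)
    then show "epi (\<lambda>t. - f t) \<inter> {(t, z). z = - (c \<bullet> e) - t \<bullet> restr \<sigma> e} \<noteq> {}" by blast
  qed
  show ?thesis using eX bf eS(2) by blast
qed


end
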